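(* For $\alpha\in[-1,1]$ let $\rho(\alpha)=\tfrac12(I+\alpha\sigma_x)=\tfrac12\begin{pmatrix}1&\alpha\\\alpha&1\end{pmatrix}$. Then for all $\alpha,\beta\in[-1,1]$ and $p\ge1$, $$D^p_{z,p}(\rho(\alpha),\rho(\beta))=2^{p-1}\Big(1-\sqrt{1-\max(\alpha^2,\beta^2)}\Big).$$
   Context: Qubit setting: $\mathcal{H}=\mathbb{C}^2$, $\mathcal{H}^*$ is identified with $\mathbb{C}^2$ via the dual basis, and $A^T$ is the usual matrix transpose; operators on $\mathcal{H}\otimes\mathcal{H}^*$ are $4\times4$ matrices in the basis $e_1\otimes e_1^*,e_1\otimes e_2^*,e_2\otimes e_1^*,e_2\otimes e_2^*$. $\sigma_x=\begin{pmatrix}0&1\\1&0\end{pmatrix}$, $\sigma_y=\begin{pmatrix}0&-i\\i&0\end{pmatrix}$, $\sigma_z=\begin{pmatrix}1&0\\0&-1\end{pmatrix}$. The set of couplings of states $\rho,\omega$ is $\mathcal{C}(\rho,\omega)=\{\Pi\in\mathcal{S}(\mathcal{H}\otimes\mathcal{H}^* ):\mathrm{tr}_{\mathcal{H}^*}[\Pi]=\omega,\ \mathrm{tr}_{\mathcal{H}}[\Pi]=\rho^T\}$. For $p\ge1$, $C_{z,p}=|\sigma_z\otimes I^T-I\otimes\sigma_z^T|^p=2^{p-1}(I\otimes I^T-\sigma_z\otimes\sigma_z^T)=\mathrm{diag}(0,2^p,2^p,0)$, and $D_{z,p}(\rho,\omega)=\big(\min_{\Pi\in\mathcal{C}(\rho,\omega)}\mathrm{tr}[\Pi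 C_{z,p}]\big)^{1/p}$. *)

theory Defs
  imports Complex_Main
begin

text \<open>Matrices are represented as functions nat => nat => complex; only the entries
  with indices below the dimension (2 for operators on H, 4 for operators on H (x) H^* )
  are meaningful.  The basis of H (x) H^* is ordered
  e1(x)e1*, e1(x)e2*, e2(x)e1*, e2(x)e2*, i.e. e_i (x) e_j^* has index 2*i+j (i,j in {0,1}).\<close>

type_synonym cmat = "nat \<Rightarrow> nat \<Rightarrow> complex"

definition idx :: "nat \<Rightarrow> nat \<Rightarrow> nat" where
  "idx i j = 2 * i + j"

definition I2 :: cmat where
  "I2 = (\<lambda>i j. if i = j then 1 else 0)"

definition sigma_x :: cmat where
  "sigma_x = (\<lambda>i j. if (i = 0 \<and> j = 1) \<or> (i = 1 \<and> j = 0) then 1 else 0)"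

definition sigma_z :: cmat where
  "sigma_z = (\<lambda>i j. if i = 0 \<and> j = 0 then 1 else if i = 1 \<and> j = 1 then -1 else 0)"

definition mtranspose :: "cmat \<Rightarrow> cmat" where
  "mtranspose A = (\<lambda>i j. A j i)"

definition kron :: "cmat \<Rightarrow> cmat \<Rightarrow> cmat" where
  "kron A B = (\<lambda>m n. A (m div 2) (n div 2) * B (m mod 2) (n mod 2))"

definition mtrace :: "nat \<Rightarrow> cmat \<Rightarrow> complex" where
  "mtrace n A = (\<Sum>i<n. A i i)"

definition hermitian :: "nat \<Rightarrow> cmat \<Rightarrow> bool" where
  "hermitian n A \<longleftrightarrow> (\<forall>i<n. \<forall>k<n. A k i = cnj (A i k))"

definition psd :: "nat \<Rightarrow> cmat \<Rightarrow> bool" where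
  "psd n A \<longleftrightarrow> hermitian n A \<and>
     (\<forall>x :: nat \<Rightarrow> complex. 0 \<le> Re (\<Sum>i<n. \<Sum>k<n. cnj (x i) * A i k * x k))"

definition is_state :: "nat \<Rightarrow> cmat \<Rightarrow> bool" where
  "is_state n A \<longleftrightarrow> psd n A \<and> mtrace n A = 1"

definition ptrace_Hstar :: "cmat \<Rightarrow> cmat" where
  "ptrace_Hstar P = (\<lambda>i k. \<Sum>j<2. P (idx i j) (idx k j))"

definition ptrace_H :: "cmat \<Rightarrow> cmat" where
  "ptrace_H P = (\<lambda>j l. \<Sum>i<2. P (idx i j) (idx i l))"

definition couplings :: "cmat \<Rightarrow> cmat \<Rightarrow> cmat set" where
  "couplings \<rho> \<omega> = {P. is_state 4 P \<and>
      (\<forall>i<2. \<forall>k<2. ptrace_Hstar P i k = \<omega> i k) \<and>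
      (\<forall>j<2. \<forall>l<2. ptrace_H P j l = mtranspose \<rho> j l)}"

definition C_z :: "real \<Rightarrow> cmat" where
  "C_z p = (\<lambda>m n. complex_of_real (2 powr (p - 1)) *
      (kron I2 (mtranspose I2) m n - kron sigma_z (mtranspose sigma_z) m n))"

definition cost :: "cmat \<Rightarrow> cmat \<Rightarrow> real" where
  "cost P C = Re (mtrace 4 (\<lambda>m n. \<Sum>k<4. P m k * C k n))"

text \<open>D_{z,p}(rho, omega) = (min over couplings of tr[Pi C_{z,p}])^{1/p}; the minimum
  is written as an infimum (it is attained by compactness).\<close>
definition D_z :: "real \<Rightarrow> cmat \<Rightarrow> cmat \<Rightarrow> real" where
  "D_z p \<rho> \<omega> = (Inf ((\<lambda>P. cost P (C_z p)) ` couplings \<rho> \<omega>)) powr (1 / p)"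

definition rho :: "real \<Rightarrow> cmat" where
  "rho \<alpha> = (\<lambda>i j. (I2 i j + complex_of_real \<alpha> * sigma_x i j) / 2)"

end

theory Submission
  imports Defs
begin
lemma real_minor:
  fixes a c B :: real
  assumes h: "\<And>s t. 0 \<le> s^2*a + 2*s*t*B + t^2*B*c" and B: "B \<ge> 0"
    and a: "a \<ge> 0" and c: "c \<ge> 0"
  shows "B \<le> a * c"
proof (cases "a = 0")
  case True
  have "0 \<le> -(2*B) - B*c" using h[of "-(c+1)" 1] True by (simp add: algebra_simps)
  moreover have "0 \<le> B*c" using B c by simp
  ultimately show ?thesis using True B by simp
next
  case False
  then have ap: "a > 0" using a by simp
  have "0 \<le> (-B)^2*a + 2*(-B)*a*B + a^2*B*c" using h[of "-B" a] .
  also have "\<dots> = a * (B * (a*c - B))" by (simp add: algebra_simps power2_eq_square)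
  finally have "0 \<le> B * (a*c - B)" using ap by (simp add: zero_le_mult_iff)
  show ?thesis
  proof (cases "B = 0")
    case True then show ?thesis using a c by simp
  next
    case False
    then have "B > 0" using B by simp
    then have "0 \<le> a*c - B" using \<open>0 \<le> B * (a*c - B)\<close> by (simp add: zero_le_mult_iff)
    then show ?thesis by simp
  qed
qed

lemma sum_two:
  fixes f :: "nat \<Rightarrow> complex"
  assumes "i<n" "k<n" "i\<noteq>k" "\<And>j. j \<noteq> i \<Longrightarrow> j \<noteq> k \<Longrightarrow> f j = 0"
  shows "(\<Sum>j<n. f j) = f i + f k"
proof -
  have "(\<Sum>j<n. f j) = (\<Sum>j\<in>{i,k}. f j)"
    by (rule sum.mono_neutral_right) (use assms in auto)
  then show ?thesis using assms by simp
qed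

lemma psd_minor_raw:
  assumes "psd n A" "i<n" "k<n" "i\<noteq>k"
  shows "0 \<le> Re (cnj u * A i i * u + cnj u * A i k * v + cnj v * A k i * u + cnj v * A k k * v)"
proof -
  define x where "x = (\<lambda>j. if j = i then u else if j = k then v else 0)"
  have 0: "0 \<le> Re (\<Sum>j<n. \<Sum>l<n. cnj (x j) * A j l * x l)" using assms(1) unfolding psd_def by blast
  have "(\<Sum>j<n. \<Sum>l<n. cnj (x j) * A j l * x l) = (\<Sum>j<n. cnj (x j) * A j i * x i + cnj (x j) * A j k * x k)"
    by (rule sum.cong[OF refl], rule sum_two) (use assms in \<open>auto simp: x_def\<close>)
  also have "\<dots> = cnj u * A i i * u + cnj u * A i k * v + (cnj v * A k i * u + cnj v * A k k * v)"
    by (subst sum_two[of i n k]) (use assms in \<open>auto simp: x_def\<close>)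
  finally show ?thesis using 0 by (simp only: add.assoc)
qed

lemma psd_minor:
  assumes "psd n A" "i<n" "k<n" "i\<noteq>k"
  shows "(cmod (A i k))^2 \<le> Re (A i i) * Re (A k k)"
proof -
  have hm: "\<And>a b. a<n \<Longrightarrow> b<n \<Longrightarrow> A b a = cnj (A a b)"
    using assms(1) unfolding psd_def hermitian_def by blast
  have h1: "A i i = cnj (A i i)" using hm[OF assms(2) assms(2)] .
  have h2: "A k k = cnj (A k k)" using hm[OF assms(3) assms(3)] .
  have herm: "A k i = cnj (A i k)" "Im (A i i) = 0" "Im (A k k) = 0"
    using hm[OF assms(2) assms(3)] apply simp
    using h1 h2 by (simp_all add: complex_eq_iff)
  have "0 \<le> s^2 * Re (A i i) + 2*s*t*(cmod (A i k))^2 + t^2*(cmod (A i k))^2 * Re (A k k)" for s t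
  proof -
    define b where "b = A i k"
    have d1: "A i i = of_real (Re (A i i))" using herm(2) by (simp add: complex_eq_iff)
    have d2: "A k k = of_real (Re (A k k))" using herm(3) by (simp add: complex_eq_iff)
    have bb: "b * cnj b = of_real ((cmod b)^2)" using complex_norm_square[of b] by simp
    have "cnj (of_real s) * A i i * of_real s + cnj (of_real s) * A i k * (of_real t * cnj (A i k))
      + cnj (of_real t * cnj (A i k)) * A k i * of_real s + cnj (of_real t * cnj (A i k)) * A k k * (of_real t * cnj (A i k))
      = of_real s * of_real s * A i i + 2 * of_real s * of_real t * (b * cnj b) + of_real t * of_real t * (b * cnj b) * A k k"
      unfolding herm(1) b_def[symmetric] by (simp add: algebra_simps)
    also have "\<dots> = of_real (s^2 * Re (A i i) + 2*s*t*(cmod b)^2 + t^2*(cmod b)^2 * Re (A k k))"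
      by (subst d1, subst d2, simp only: bb of_real_mult of_real_add power2_eq_square of_real_numeral)
    finally show ?thesis
      using psd_minor_raw[OF assms, of "of_real s" "of_real t * cnj (A i k)"] unfolding b_def by simp
  qed
  moreover have "0 \<le> Re (A i i)" using psd_minor_raw[OF assms, of 1 0] herm by simp
  moreover have "0 \<le> Re (A k k)" using psd_minor_raw[OF assms, of 0 1] herm by simp
  ultimately show ?thesis by (intro real_minor) auto
qed
lemma re_cnj_mult: "Re (cnj z * z) = (cmod z)^2"
  unfolding cmod_power2 by (simp add: power2_eq_square)

lemma psd_rank2:
  fixes v w :: "nat \<Rightarrow> real"
  shows "psd n (\<lambda>i k. complex_of_real (v i * v k + w i * w k))"
  unfolding psd_def hermitian_def
proof (intro conjI allI impI)
  fix i k show "complex_of_real (v k * v i + w k * w i) = cnj (complex_of_real (v i * v k + w i * w k))"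
    by (simp add: mult.commute)
next
  fix x :: "nat \<Rightarrow> complex"
  define Sv where "Sv = (\<Sum>k<n. of_real (v k) * x k)"
  define Sw where "Sw = (\<Sum>k<n. of_real (w k) * x k)"
  have "(\<Sum>i<n. \<Sum>k<n. cnj (x i) * complex_of_real (v i * v k + w i * w k) * x k)
     = (\<Sum>i<n. \<Sum>k<n. (cnj (x i) * of_real (v i)) * (of_real (v k) * x k))
       + (\<Sum>i<n. \<Sum>k<n. (cnj (x i) * of_real (w i)) * (of_real (w k) * x k))"
    by (simp add: sum.distrib[symmetric] algebra_simps)
  also have "\<dots> = cnj Sv * Sv + cnj Sw * Sw"
  proof -
    have c1: "cnj Sv = (\<Sum>i<n. cnj (x i) * of_real (v i))" unfolding Sv_def cnj_sum
      by (simp add: mult.commute)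
    have c2: "cnj Sw = (\<Sum>i<n. cnj (x i) * of_real (w i))" unfolding Sw_def cnj_sum
      by (simp add: mult.commute)
    show ?thesis unfolding c1 c2 unfolding Sv_def Sw_def sum_product ..
  qed
  finally have "Re (\<Sum>i<n. \<Sum>k<n. cnj (x i) * complex_of_real (v i * v k + w i * w k) * x k)
     = (cmod Sv)^2 + (cmod Sw)^2"
    by (simp only: plus_complex.sel re_cnj_mult)
  then show "0 \<le> Re (\<Sum>i<n. \<Sum>k<n. cnj (x i) * complex_of_real (v i * v k + w i * w k) * x k)"
    by simp
qed

lemma exists_pqru:
  fixes a b X Y :: real
  assumes a: "a \<ge> 0" and b: "b \<ge> 0" and h: "\<bar>X\<bar> + \<bar>Y\<bar> = sqrt (a*b)"
  shows "\<exists>p q r u. p^2 + r^2 = a \<and> q^2 + u^2 = b \<and> p*q = X \<and> r*u = Y"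
proof (cases "a * b = 0")
  case True
  then have "X = 0" "Y = 0" using h by auto
  moreover have "sqrt a * sqrt b = 0" using True by (simp add: real_sqrt_mult[symmetric])
  ultimately show ?thesis using a b
    by (intro exI[of _ "sqrt a"] exI[of _ "sqrt b"] exI[of _ 0]) auto
next
  case False
  define K where "K = sqrt (a*b)"
  have K: "K > 0" using False a b unfolding K_def by (simp add: order_le_less)
  define l where "l = \<bar>X\<bar> / K"
  define mu where "mu = \<bar>Y\<bar> / K"
  have l: "l \<ge> 0" "mu \<ge> 0" using K unfolding l_def mu_def by auto
  have "l + mu = (\<bar>X\<bar> + \<bar>Y\<bar>) / K" unfolding l_def mu_def by (simp add: add_divide_distrib)
  then have lm: "l + mu = 1" using K h unfolding K_def by (metis divide_self less_irrefl)
  have sq1: "(sqrt (l*a))^2 = l*a" "(sqrt (mu*a))^2 = mu*a" using l a by simp_all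
  have "(sqrt (l*a))^2 + (sqrt (mu*a))^2 = (l+mu)*a" unfolding sq1 by (simp add: algebra_simps)
  then have A: "(sqrt (l*a))^2 + (sqrt (mu*a))^2 = a" using lm by simp
  have sX: "(sgn X * sqrt (l*b))^2 = l*b"
  proof (cases "X = 0")
    case True then show ?thesis unfolding l_def by simp
  next
    case False then show ?thesis using l b by (simp add: power_mult_distrib sgn_if)
  qed
  have sY: "(sgn Y * sqrt (mu*b))^2 = mu*b"
  proof (cases "Y = 0")
    case True then show ?thesis unfolding mu_def by simp
  next
    case False then show ?thesis using l b by (simp add: power_mult_distrib sgn_if)
  qed
  have "(sgn X * sqrt (l*b))^2 + (sgn Y * sqrt (mu*b))^2 = (l+mu)*b" unfolding sX sY by (simp add: algebra_simps)
  then have B: "(sgn X * sqrt (l*b))^2 + (sgn Y * sqrt (mu*b))^2 = b" using lm by simp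
  have sqm: "sqrt (z*a) * sqrt (z*b) = z * K" if "z \<ge> 0" for z
  proof -
    have "sqrt (z*a) * sqrt (z*b) = sqrt (z*a*(z*b))" by (simp add: real_sqrt_mult)
    also have "z*a*(z*b) = z^2 * (a*b)" by (simp add: power2_eq_square algebra_simps)
    also have "sqrt (z^2 * (a*b)) = z * K" unfolding K_def real_sqrt_mult using that by simp
    finally show ?thesis .
  qed
  have "sqrt (l*a) * (sgn X * sqrt (l*b)) = sgn X * (sqrt (l*a) * sqrt (l*b))" by (simp add: algebra_simps)
  also have "\<dots> = sgn X * (l * K)" using sqm l by simp
  also have "\<dots> = X" using K unfolding l_def by (simp add: sgn_mult_abs)
  finally have C: "sqrt (l*a) * (sgn X * sqrt (l*b)) = X" .
  have "sqrt (mu*a) * (sgn Y * sqrt (mu*b)) = sgn Y * (sqrt (mu*a) * sqrt (mu*b))" by (simp add: algebra_simps)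
  also have "\<dots> = sgn Y * (mu * K)" using sqm l by simp
  also have "\<dots> = Y" using K unfolding mu_def by (simp add: sgn_mult_abs)
  finally have D: "sqrt (mu*a) * (sgn Y * sqrt (mu*b)) = Y" .
  show ?thesis using A B C D by blast
qed
lemma four: "{..<4::nat} = {0,1,2,3}" by auto
lemma two: "{..<2::nat} = {0,1}" by auto
lemma all2: "(\<forall>i<(2::nat). Q i) \<longleftrightarrow> Q 0 \<and> Q 1"
  by (auto simp: less_2_cases_iff)

lemma cost_eq: "cost P (C_z p) = 2 powr (p-1) * 2 * Re (P 1 1 + P 2 2)"
  unfolding cost_def mtrace_def C_z_def kron_def I2_def mtranspose_def sigma_z_def four
  by (simp add: algebra_simps)

lemma coupling_eqs:
  assumes "P \<in> couplings (rho \<alpha>) (rho \<beta>)"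
  shows "P 0 0 + P 1 1 = 1/2" "P 2 2 + P 3 3 = 1/2" "P 0 0 + P 2 2 = 1/2" "P 1 1 + P 3 3 = 1/2"
    "P 0 2 + P 1 3 = of_real (\<beta>/2)" "P 0 1 + P 2 3 = of_real (\<alpha>/2)"
    "psd 4 P"
proof -
  have H: "\<forall>i<2. \<forall>k<2. ptrace_Hstar P i k = rho \<beta> i k"
   and H2: "\<forall>j<2. \<forall>l<2. ptrace_H P j l = mtranspose (rho \<alpha>) j l"
   and S: "is_state 4 P"
    using assms unfolding couplings_def by auto
  show "psd 4 P" using S unfolding is_state_def by simp
  have e1: "ptrace_Hstar P 0 0 = rho \<beta> 0 0" "ptrace_Hstar P 1 1 = rho \<beta> 1 1" "ptrace_Hstar P 0 1 = rho \<beta> 0 1"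
    using H by auto
  have e2: "ptrace_H P 0 0 = mtranspose (rho \<alpha>) 0 0" "ptrace_H P 1 1 = mtranspose (rho \<alpha>) 1 1"
      "ptrace_H P 0 1 = mtranspose (rho \<alpha>) 0 1"
    using H2 by auto
  show "P 0 0 + P 1 1 = 1/2" "P 2 2 + P 3 3 = 1/2" "P 0 2 + P 1 3 = of_real (\<beta>/2)"
    using e1 unfolding ptrace_Hstar_def idx_def two rho_def I2_def sigma_x_def by (simp_all add: eval_nat_numeral)
  show "P 0 0 + P 2 2 = 1/2" "P 1 1 + P 3 3 = 1/2" "P 0 1 + P 2 3 = of_real (\<alpha>/2)"
    using e2 unfolding ptrace_H_def idx_def two rho_def I2_def sigma_x_def mtranspose_def by (simp_all add: eval_nat_numeral)
qed

lemma sum_sq_bound: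
  fixes x y :: complex
  shows "(cmod (x + y))^2 \<le> 2 * (cmod x)^2 + 2 * (cmod y)^2"
proof -
  have "cmod (x+y) \<le> cmod x + cmod y" by (rule norm_triangle_ineq)
  then have "(cmod (x+y))^2 \<le> (cmod x + cmod y)^2" by (simp add: power_mono)
  also have "\<dots> \<le> 2 * (cmod x)^2 + 2 * (cmod y)^2"
    using sum_squares_ge_zero[of "cmod x - cmod y" 0]
    by (simp add: power2_eq_square algebra_simps)
  finally show ?thesis .
qed

lemma lower:
  assumes "P \<in> couplings (rho \<alpha>) (rho \<beta>)"
  shows "2 powr (p - 1) * (1 - sqrt (1 - max (\<alpha>\<^sup>2) (\<beta>\<^sup>2))) \<le> cost P (C_z p)"
proof -
  note E = coupling_eqs[OF assms]
  define a where "a = Re (P 0 0)"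
  have r11: "Re (P 1 1) = 1/2 - a" using arg_cong[OF E(1), of Re] unfolding a_def by simp
  have r22: "Re (P 2 2) = 1/2 - a" using arg_cong[OF E(3), of Re] unfolding a_def by simp
  have r33: "Re (P 3 3) = a" using arg_cong[OF E(4), of Re] r11 by simp
  have m02: "(cmod (P 0 2))^2 \<le> a * (1/2 - a)" using psd_minor[OF E(7), of 0 2] r22 a_def by simp
  have m13: "(cmod (P 1 3))^2 \<le> a * (1/2 - a)" using psd_minor[OF E(7), of 1 3] r11 r33 by (simp add: mult.commute)
  have m01: "(cmod (P 0 1))^2 \<le> a * (1/2 - a)" using psd_minor[OF E(7), of 0 1] r11 a_def by simp
  have m23: "(cmod (P 2 3))^2 \<le> a * (1/2 - a)" using psd_minor[OF E(7), of 2 3] r22 r33 by (simp add: mult.commute)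
  have "(cmod (of_real (\<beta>/2)))^2 \<le> 4 * (a * (1/2 - a))"
    using sum_sq_bound[of "P 0 2" "P 1 3"] m02 m13 unfolding E(5) by simp
  then have b: "\<beta>^2 \<le> 8*a - 16*a^2" by (simp add: power2_eq_square algebra_simps)
  have "(cmod (of_real (\<alpha>/2)))^2 \<le> 4 * (a * (1/2 - a))"
    using sum_sq_bound[of "P 0 1" "P 2 3"] m01 m23 unfolding E(6) by simp
  then have al: "\<alpha>^2 \<le> 8*a - 16*a^2" by (simp add: power2_eq_square algebra_simps)
  have "(4*a - 1)^2 \<le> 1 - max (\<alpha>\<^sup>2) (\<beta>\<^sup>2)" using b al by (simp add: power2_eq_square algebra_simps)
  then have s: "4*a - 1 \<le> sqrt (1 - max (\<alpha>\<^sup>2) (\<beta>\<^sup>2))" by (rule real_le_rsqrt)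
  have "cost P (C_z p) = 2 powr (p-1) * (2 - 4*a)" unfolding cost_eq using r11 r22 by simp
  moreover have "1 - sqrt (1 - max (\<alpha>\<^sup>2) (\<beta>\<^sup>2)) \<le> 2 - 4*a" using s by simp
  ultimately show ?thesis by simp
qed
lemma sqrt_max_sq: "sqrt (max (\<alpha>\<^sup>2) (\<beta>\<^sup>2)) = max \<bar>\<alpha>\<bar> \<bar>\<beta>\<bar>"
proof (cases "\<bar>\<alpha>\<bar> \<le> \<bar>\<beta>\<bar>")
  case True
  then have "\<alpha>\<^sup>2 \<le> \<beta>\<^sup>2" by (simp add: abs_le_square_iff)
  then show ?thesis using True by (simp add: max_def)
next
  case False
  then have "\<beta>\<^sup>2 \<le> \<alpha>\<^sup>2" by (simp add: abs_le_square_iff)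
  then show ?thesis using False by (simp add: max_def)
qed

lemma abs_pm: "\<bar>(\<alpha>::real) + \<beta>\<bar> + \<bar>\<alpha> - \<beta>\<bar> = 2 * max \<bar>\<alpha>\<bar> \<bar>\<beta>\<bar>"
  by (simp add: abs_if max_def)

lemma upper:
  assumes "-1 \<le> \<alpha>" "\<alpha> \<le> 1" "-1 \<le> \<beta>" "\<beta> \<le> 1"
  shows "\<exists>P \<in> couplings (rho \<alpha>) (rho \<beta>).
           cost P (C_z pp) = 2 powr (pp - 1) * (1 - sqrt (1 - max (\<alpha>\<^sup>2) (\<beta>\<^sup>2)))"
proof -
  define m where "m = max (\<alpha>\<^sup>2) (\<beta>\<^sup>2)"
  define s where "s = sqrt (1 - m)"
  have m0: "0 \<le> m" "m \<le> 1" unfolding m_def using assms by (auto simp: abs_square_le_1 max_def)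
  have s0: "0 \<le> s" "s \<le> 1" "s^2 = 1 - m" unfolding s_def using m0 by auto
  define a0 where "a0 = (1+s)/4"
  define b0 where "b0 = (1-s)/4"
  have ab0: "a0 \<ge> 0" "b0 \<ge> 0" unfolding a0_def b0_def using s0 by auto
  have "a0 * b0 = m / 16" unfolding a0_def b0_def using s0(3) by (simp add: power2_eq_square algebra_simps)
  also have "m / 16 = (sqrt m / 4)^2" using m0 by (simp add: power_divide)
  finally have "sqrt (a0 * b0) = sqrt m / 4" using m0 by simp
  then have "sqrt (a0 * b0) = max \<bar>\<alpha>\<bar> \<bar>\<beta>\<bar> / 4" unfolding m_def
    by (simp add: sqrt_max_sq)
  then have "\<bar>(\<alpha>+\<beta>)/8\<bar> + \<bar>(\<alpha>-\<beta>)/8\<bar> = sqrt (a0 * b0)" using abs_pm[of \<alpha> \<beta>] by simp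
  then obtain p q r u where pq: "p^2 + r^2 = a0" "q^2 + u^2 = b0" "p*q = (\<alpha>+\<beta>)/8" "r*u = (\<alpha>-\<beta>)/8"
    using exists_pqru[OF ab0] by blast
  define v where "v = (\<lambda>j::nat. if j = 0 then p else if j = 1 then q else if j = 2 then q else p)"
  define w where "w = (\<lambda>j::nat. if j = 0 then r else if j = 1 then u else if j = 2 then -u else -r)"
  define P where "P = (\<lambda>i k. complex_of_real (v i * v k + w i * w k))"
  have pp2: "p*p + r*r = a0" "q*q + u*u = b0" using pq by (simp_all add: power2_eq_square)
  have sab: "a0 + b0 = 1/2" unfolding a0_def b0_def by (simp add: field_simps)
  have tr: "mtrace 4 P = 1"
  proof -
    have "mtrace 4 P = of_real (2*(p*p + r*r) + 2*(q*q + u*u))"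
      unfolding mtrace_def four P_def v_def w_def by (simp add: algebra_simps)
    also have "\<dots> = of_real 1" unfolding pp2 using sab by (intro arg_cong[where f=of_real]) simp
    also have "\<dots> = 1" by simp
    finally show ?thesis .
  qed
  have R: "p*p + r*r + (q*q + u*u) = 1/2" "p*q - r*u = \<beta>/4" "p*q + r*u = \<alpha>/4"
    using pp2 sab pq(3,4) by (simp_all add: field_simps)
  have st: "is_state 4 P" unfolding is_state_def using tr psd_rank2[of 4 v w] unfolding P_def by simp
  have c1: "ptrace_Hstar P i k = rho \<beta> i k" if "i < 2" "k < 2" for i k
  proof -
    have "i = 0 \<or> i = 1" "k = 0 \<or> k = 1" using that by auto
    then show ?thesis
      unfolding ptrace_Hstar_def idx_def two P_def v_def w_def rho_def I2_def sigma_x_def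
      using R by (auto simp: complex_eq_iff) 
  qed
  have c2: "ptrace_H P j l = mtranspose (rho \<alpha>) j l" if "j < 2" "l < 2" for j l
  proof -
    have "j = 0 \<or> j = 1" "l = 0 \<or> l = 1" using that by auto
    then show ?thesis
      unfolding ptrace_H_def idx_def two P_def v_def w_def rho_def I2_def sigma_x_def mtranspose_def
      using R by (auto simp: complex_eq_iff)
  qed
  have PC: "P \<in> couplings (rho \<alpha>) (rho \<beta>)" unfolding couplings_def using st c1 c2 by auto
  have "cost P (C_z pp) = 2 powr (pp-1) * 2 * (2 * (q*q + u*u))"
    unfolding cost_eq P_def v_def w_def by simp
  also have "\<dots> = 2 powr (pp - 1) * (1 - s)" unfolding pp2 b0_def by simp
  finally show ?thesis using PC unfolding s_def m_def by blast
qed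
theorem proposition3p5:
  fixes \<alpha> \<beta> p :: real
  assumes "-1 \<le> \<alpha>" "\<alpha> \<le> 1" "-1 \<le> \<beta>" "\<beta> \<le> 1" "1 \<le> p"
  shows "(D_z p (rho \<alpha>) (rho \<beta>)) powr p
           = 2 powr (p - 1) * (1 - sqrt (1 - max (\<alpha>\<^sup>2) (\<beta>\<^sup>2)))"
proof -
  define V where "V = 2 powr (p - 1) * (1 - sqrt (1 - max (\<alpha>\<^sup>2) (\<beta>\<^sup>2)))"
  obtain P0 where P0: "P0 \<in> couplings (rho \<alpha>) (rho \<beta>)" "cost P0 (C_z p) = V"
    using upper[OF assms(1-4), of p] unfolding V_def by blast
  have inf: "Inf ((\<lambda>P. cost P (C_z p)) ` couplings (rho \<alpha>) (rho \<beta>)) = V"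
  proof (rule cInf_eq_minimum)
    show "V \<in> (\<lambda>P. cost P (C_z p)) ` couplings (rho \<alpha>) (rho \<beta>)" using P0 by force
  next
    fix x assume "x \<in> (\<lambda>P. cost P (C_z p)) ` couplings (rho \<alpha>) (rho \<beta>)"
    then show "V \<le> x" using lower unfolding V_def by blast
  qed
  have "max (\<alpha>\<^sup>2) (\<beta>\<^sup>2) \<ge> 0" by (simp add: le_max_iff_disj)
  then have "sqrt (1 - max (\<alpha>\<^sup>2) (\<beta>\<^sup>2)) \<le> 1" by simp
  then have V0: "V \<ge> 0" unfolding V_def by simp
  have "(D_z p (rho \<alpha>) (rho \<beta>)) powr p = (V powr (1/p)) powr p"
    unfolding D_z_def inf ..
  also have "\<dots> = V powr (1/p * p)" by (simp add: powr_powr)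
  also have "1/p * p = 1" using assms(5) by simp
  also have "V powr 1 = V" using V0 by simp
  finally show ?thesis unfolding V_def .
qed
end
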